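(* Let $M$ be a monoid and let $\sigma : X^* \to M$ and $\tau : Y^* \to M$ be finite monoid choices of generators. Then $L_\sigma(M)$ is an inverse morphic image of $L_\tau(M)$, i.e. there is a monoid morphism $\rho : \hat{X}^* \to \hat{Y}^*$ with $L_\sigma(M) = \{w \in \hat{X}^* : w\rho \in L_\tau(M)\}$. The corresponding statement holds for a semigroup $S$ with finite semigroup choices of generators $\sigma : X^+ \to S$ and $\tau : Y^+ \to S$.
   Context: Maps are written on the right. $X^*$, $X^+$: free monoid and free semigroup on $X$. For a monoid $M$ and surjective monoid morphism $\sigma : X^* \to M$, let $\overline{X} = \{\overline{x} : x \in X\}$ be new symbols, $\hat{X} = X \cup \overline{X}$; the loop automaton has vertex set $M$, for each $a \in M$, $x \in X$ an edge $a \to a(x\sigma)$ labelled $x$ and an edge $a(x\sigma) \to a$ labelled $\overline{x}$; the loop problem $L_\sigma(M) \subseteq \hat{X}^*$ is the set of labels of paths from the identity to the identity. For a semigroup $S$ and surjective morphism $\sigma : X^+ \to S$, $L_\sigma(S)$ is the loop problem of $S^1$ ($S$ with a new identity adjoined, even if one exists) with respect to the unique extension $\sigma^1 : X^* \to S^1$. *)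

theory Defs
  imports Main
begin

text \<open>Words are lists. For an alphabet X, the letters of hat X are pairs (x, b)
 with x in X; (x, False) is x and (x, True) is the barred letter.\<close>

definition hat :: "'x set \<Rightarrow> ('x \<times> bool) set" where
  "hat X = X \<times> UNIV"

definition monoid_choice :: "'x set \<Rightarrow> ('x list \<Rightarrow> 'm::monoid_mult) \<Rightarrow> bool" where
  "monoid_choice X \<sigma> \<longleftrightarrow> finite X \<and> \<sigma> [] = 1 \<and>
     (\<forall>u\<in>lists X. \<forall>v\<in>lists X. \<sigma> (u @ v) = \<sigma> u * \<sigma> v) \<and>
     (\<forall>m. \<exists>w\<in>lists X. \<sigma> w = m)"

definition semigroup_choice :: "'x set \<Rightarrow> ('x list \<Rightarrow> 's::semigroup_mult) \<Rightarrow> bool" where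
  "semigroup_choice X \<sigma> \<longleftrightarrow> finite X \<and>
     (\<forall>u\<in>lists X - {[]}. \<forall>v\<in>lists X - {[]}. \<sigma> (u @ v) = \<sigma> u * \<sigma> v) \<and>
     (\<forall>s. \<exists>w\<in>lists X - {[]}. \<sigma> w = s)"

definition free_morphism :: "'a set \<Rightarrow> 'b set \<Rightarrow> ('a list \<Rightarrow> 'b list) \<Rightarrow> bool" where
  "free_morphism A B \<rho> \<longleftrightarrow> \<rho> [] = [] \<and> (\<forall>w\<in>lists A. \<rho> w \<in> lists B) \<and>
     (\<forall>u\<in>lists A. \<forall>v\<in>lists A. \<rho> (u @ v) = \<rho> u @ \<rho> v)"

text \<open>Paths in the loop automaton of a monoid with multiplication mult, where gen x
 is the image of the generator x: edge a \<rightarrow> mult a (gen x) labelled x and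
 edge mult a (gen x) \<rightarrow> a labelled x-bar.\<close>
inductive lpath :: "('v \<Rightarrow> 'v \<Rightarrow> 'v) \<Rightarrow> ('x \<Rightarrow> 'v) \<Rightarrow> 'v \<Rightarrow> ('x \<times> bool) list \<Rightarrow> 'v \<Rightarrow> bool"
  for mult gen where
  nil: "lpath mult gen a [] a"
| fwd: "lpath mult gen (mult a (gen x)) w b \<Longrightarrow> lpath mult gen a ((x, False) # w) b"
| bwd: "lpath mult gen a w b \<Longrightarrow> lpath mult gen (mult a (gen x)) ((x, True) # w) b"

definition loop_problem_gen ::
  "('v \<Rightarrow> 'v \<Rightarrow> 'v) \<Rightarrow> 'v \<Rightarrow> 'x set \<Rightarrow> ('x \<Rightarrow> 'v) \<Rightarrow> ('x \<times> bool) list set" where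
  "loop_problem_gen mult e X gen = {w \<in> lists (hat X). lpath mult gen e w e}"

definition loop_problem :: "'x set \<Rightarrow> ('x list \<Rightarrow> 'm::monoid_mult) \<Rightarrow> ('x \<times> bool) list set" where
  "loop_problem X \<sigma> = loop_problem_gen (*) 1 X (\<lambda>x. \<sigma> [x])"

text \<open>S^1: S with a new identity adjoined, modelled as 's option with None the new identity.\<close>
fun adj_mult :: "'s::semigroup_mult option \<Rightarrow> 's option \<Rightarrow> 's option" where
  "adj_mult None b = b"
| "adj_mult a None = a"
| "adj_mult (Some a) (Some b) = Some (a * b)"

definition ext1 :: "('x list \<Rightarrow> 's) \<Rightarrow> 'x list \<Rightarrow> 's option" where
  "ext1 \<sigma> w = (if w = [] then None else Some (\<sigma> w))"

definition sg_loop_problem :: "'x set \<Rightarrow> ('x list \<Rightarrow> 's::semigroup_mult) \<Rightarrow> ('x \<times> bool) list set" where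
  "sg_loop_problem X \<sigma> = loop_problem_gen adj_mult None X (\<lambda>x. ext1 \<sigma> [x])"

end

theory Submission
  imports Defs
begin

lemma lpath_nil_iff: "lpath m g a [] b \<longleftrightarrow> a = b"
  by (auto elim: lpath.cases intro: lpath.intros)

lemma lpath_fwd_iff: "lpath m g a ((x, False) # w) b \<longleftrightarrow> lpath m g (m a (g x)) w b"
  by (auto elim: lpath.cases intro: lpath.intros)

lemma lpath_bwd_iff: "lpath m g c ((x, True) # w) b \<longleftrightarrow> (\<exists>a. c = m a (g x) \<and> lpath m g a w b)"
  by (auto elim: lpath.cases intro: lpath.intros)

lemma lpath_append_iff: "lpath m g a (v @ w) b \<longleftrightarrow> (\<exists>c. lpath m g a v c \<and> lpath m g c w b)"
proof (induction v arbitrary: a)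
  case Nil
  then show ?case by (simp add: lpath_nil_iff)
next
  case (Cons p v)
  obtain x t where p: "p = (x, t)" by (cases p)
  show ?case
  proof (cases t)
    case True
    then show ?thesis using Cons p by (auto simp: lpath_bwd_iff)
  next
    case False
    then show ?thesis using Cons p by (auto simp: lpath_fwd_iff)
  qed
qed

lemma lpath_fwd_word: "lpath m g a (map (\<lambda>y. (y, False)) u) b \<longleftrightarrow> b = foldl (\<lambda>c y. m c (g y)) a u"
  by (induction u arbitrary: a) (auto simp: lpath_nil_iff lpath_fwd_iff)

lemma lpath_bwd_word: "lpath m g c (rev (map (\<lambda>y. (y, True)) u)) d \<longleftrightarrow> c = foldl (\<lambda>c y. m c (g y)) d u"
  by (induction u arbitrary: c rule: rev_induct) (auto simp: lpath_nil_iff lpath_bwd_iff)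

definition rho_of :: "('x \<Rightarrow> 'y list) \<Rightarrow> ('x \<times> bool) list \<Rightarrow> ('y \<times> bool) list" where
  "rho_of u w = concat (map (\<lambda>(x, t). if t then rev (map (\<lambda>y. (y, True)) (u x))
                                      else map (\<lambda>y. (y, False)) (u x)) w)"

lemma rho_of_free:
  assumes "\<forall>x\<in>X. u x \<in> lists Y"
  shows "free_morphism (hat X) (hat Y) (rho_of u)"
  using assms unfolding free_morphism_def rho_of_def hat_def by (fastforce split: if_splits)

lemma rho_of_lpath:
  assumes "\<forall>x\<in>X. \<forall>a. foldl (\<lambda>c y. m c (gY y)) a (u x) = m a (gX x)"
  shows "w \<in> lists (hat X) \<Longrightarrow> lpath m gY a (rho_of u w) b \<longleftrightarrow> lpath m gX a w b"
proof (induction w arbitrary: a)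
  case Nil
  then show ?case by (simp add: rho_of_def lpath_nil_iff)
next
  case (Cons p w)
  obtain x t where p: "p = (x, t)" by (cases p)
  have x: "x \<in> X" using Cons.prems p by (auto simp: hat_def)
  have w: "w \<in> lists (hat X)" using Cons.prems by auto
  have r: "rho_of u (p # w) = (if t then rev (map (\<lambda>y. (y, True)) (u x))
                                      else map (\<lambda>y. (y, False)) (u x)) @ rho_of u w"
    by (simp add: rho_of_def p)
  show ?case
  proof (cases t)
    case True
    then show ?thesis using Cons.IH[OF w] assms x p r
      by (auto simp: lpath_append_iff lpath_bwd_word lpath_bwd_iff)
  next
    case False
    then show ?thesis using Cons.IH[OF w] assms x p r
      by (auto simp: lpath_append_iff lpath_fwd_word lpath_fwd_iff)
  qed
qed

lemma loop_gen_eq: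
  assumes "\<forall>x\<in>X. u x \<in> lists Y"
    and "\<forall>x\<in>X. \<forall>a. foldl (\<lambda>c y. m c (gY y)) a (u x) = m a (gX x)"
  shows "loop_problem_gen m e X gX = {w \<in> lists (hat X). rho_of u w \<in> loop_problem_gen m e Y gY}"
proof -
  have "w \<in> lists (hat X) \<Longrightarrow> rho_of u w \<in> lists (hat Y)" for w
    using rho_of_free[OF assms(1)] unfolding free_morphism_def by blast
  then show ?thesis
    unfolding loop_problem_gen_def using rho_of_lpath[OF assms(2)] by blast
qed

lemma mon_fold:
  assumes "monoid_choice Y \<tau>"
  shows "u \<in> lists Y \<Longrightarrow> foldl (\<lambda>c y. c * \<tau> [y]) a u = a * \<tau> u"
proof (induction u arbitrary: a)
  case Nil
  then show ?case using assms by (simp add: monoid_choice_def)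
next
  case (Cons y ys)
  have "\<tau> ([y] @ ys) = \<tau> [y] * \<tau> ys" using assms Cons.prems unfolding monoid_choice_def
    by (metis Cons_in_lists_iff lists.Nil lists.Cons)
  then show ?case using Cons by (simp add: mult.assoc)
qed

lemma adj_assoc: "adj_mult (adj_mult a (Some p)) (Some q) = adj_mult a (Some (p * q))"
  by (cases a) (auto simp: mult.assoc)

lemma sg_fold:
  assumes "semigroup_choice Y \<tau>"
  shows "u \<in> lists Y \<Longrightarrow> u \<noteq> [] \<Longrightarrow> foldl (\<lambda>c y. adj_mult c (ext1 \<tau> [y])) a u = adj_mult a (Some (\<tau> u))"
proof (induction u arbitrary: a)
  case Nil
  then show ?case by simp
next
  case (Cons y ys)
  show ?case
  proof (cases "ys = []")
    case True
    then show ?thesis by (simp add: ext1_def)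
  next
    case False
    have "\<tau> ([y] @ ys) = \<tau> [y] * \<tau> ys" using assms Cons.prems False unfolding semigroup_choice_def
    by (metis Cons_in_lists_iff lists.Nil lists.Cons DiffI empty_iff insert_iff not_Cons_self2)
    then show ?thesis using Cons False by (simp add: ext1_def adj_assoc)
  qed
qed

theorem proposition4p6:
  shows "(\<forall>(X :: 'x set) (Y :: 'y set) (\<sigma> :: 'x list \<Rightarrow> 'm::monoid_mult) (\<tau> :: 'y list \<Rightarrow> 'm).
            monoid_choice X \<sigma> \<and> monoid_choice Y \<tau> \<longrightarrow>
            (\<exists>\<rho>. free_morphism (hat X) (hat Y) \<rho> \<and>
                 loop_problem X \<sigma> = {w \<in> lists (hat X). \<rho> w \<in> loop_problem Y \<tau>}))
       \<and> (\<forall>(X :: 'x set) (Y :: 'y set) (\<sigma> :: 'x list \<Rightarrow> 's::semigroup_mult) (\<tau> :: 'y list \<Rightarrow> 's).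
            semigroup_choice X \<sigma> \<and> semigroup_choice Y \<tau> \<longrightarrow>
            (\<exists>\<rho>. free_morphism (hat X) (hat Y) \<rho> \<and>
                 sg_loop_problem X \<sigma> = {w \<in> lists (hat X). \<rho> w \<in> sg_loop_problem Y \<tau>}))"
proof (intro conjI allI impI)
  fix X :: "'x set" and Y :: "'y set" and \<sigma> :: "'x list \<Rightarrow> 'm::monoid_mult" and \<tau> :: "'y list \<Rightarrow> 'm"
  assume h: "monoid_choice X \<sigma> \<and> monoid_choice Y \<tau>"
  define u where "u x = (SOME v. v \<in> lists Y \<and> \<tau> v = \<sigma> [x])" for x
  have u: "u x \<in> lists Y \<and> \<tau> (u x) = \<sigma> [x]" for x
  proof -
    obtain v where "v \<in> lists Y" "\<tau> v = \<sigma> [x]" using h unfolding monoid_choice_def by metis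
    then show ?thesis unfolding u_def by (rule someI[where P = "\<lambda>v. v \<in> lists Y \<and> \<tau> v = \<sigma> [x]", OF conjI])
  qed
  have f: "\<forall>x\<in>X. \<forall>a. foldl (\<lambda>c y. c * \<tau> [y]) a (u x) = a * \<sigma> [x]"
    using mon_fold[OF conjunct2[OF h]] u by metis
  show "\<exists>\<rho>. free_morphism (hat X) (hat Y) \<rho> \<and>
                 loop_problem X \<sigma> = {w \<in> lists (hat X). \<rho> w \<in> loop_problem Y \<tau>}"
    apply (rule exI[of _ "rho_of u"])
    using rho_of_free[of X u Y] loop_gen_eq[of X u Y "(*)" "\<lambda>y. \<tau> [y]" "\<lambda>x. \<sigma> [x]" 1] u f
    unfolding loop_problem_def by blast
next
  fix X :: "'x set" and Y :: "'y set" and \<sigma> :: "'x list \<Rightarrow> 's::semigroup_mult" and \<tau> :: "'y list \<Rightarrow> 's"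
  assume h: "semigroup_choice X \<sigma> \<and> semigroup_choice Y \<tau>"
  define u where "u x = (SOME v. v \<in> lists Y \<and> v \<noteq> [] \<and> \<tau> v = \<sigma> [x])" for x
  have u: "u x \<in> lists Y \<and> u x \<noteq> [] \<and> \<tau> (u x) = \<sigma> [x]" for x
  proof -
    obtain v where "v \<in> lists Y" "v \<noteq> []" "\<tau> v = \<sigma> [x]" using h unfolding semigroup_choice_def by blast
    then show ?thesis unfolding u_def by (metis (mono_tags, lifting) someI)
  qed
  have f: "\<forall>x\<in>X. \<forall>a. foldl (\<lambda>c y. adj_mult c (ext1 \<tau> [y])) a (u x) = adj_mult a (ext1 \<sigma> [x])"
    using sg_fold[OF conjunct2[OF h]] u by (simp add: ext1_def)
  show "\<exists>\<rho>. free_morphism (hat X) (hat Y) \<rho> \<and>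
                 sg_loop_problem X \<sigma> = {w \<in> lists (hat X). \<rho> w \<in> sg_loop_problem Y \<tau>}"
    apply (rule exI[of _ "rho_of u"])
    using rho_of_free[of X u Y] loop_gen_eq[of X u Y adj_mult "\<lambda>y. ext1 \<tau> [y]" "\<lambda>x. ext1 \<sigma> [x]" None] u f
    unfolding sg_loop_problem_def by blast
qed

end
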